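(* Let $\Delta$ be the root system of a simple complex Lie algebra, with simple roots $\Pi$ and highest root $\theta$. Let $\alpha\in\Pi$ and let $i,j\ge 1$ be integers with $i+j\le\mathrm{ht}_\alpha(\theta)$. Then for any $\mu\in\Delta_\alpha(i)$ there is $\nu\in\Delta_\alpha(j)$ such that $\mu+\nu\in\Delta_\alpha(i+j)$ (in particular $\mu+\nu$ is a root).
   Context: For $\mu=\sum_{\beta\in\Pi}c_\beta\beta$, $\mathrm{ht}_\alpha(\mu)=c_\alpha$, and $\Delta_\alpha(i)=\{\gamma\in\Delta\mid\mathrm{ht}_\alpha(\gamma)=i\}$. *)

theory Defs
  imports "HOL-Analysis.Analysis"
begin

definition root_reflection :: "'a::euclidean_space \<Rightarrow> 'a \<Rightarrow> 'a" where
  "root_reflection \<alpha> \<beta> = \<beta> - (2 * (\<beta> \<bullet> \<alpha>) / (\<alpha> \<bullet> \<alpha>)) *\<^sub>R \<alpha>"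

definition root_system :: "'a::euclidean_space set \<Rightarrow> bool" where
  "root_system \<Delta> \<longleftrightarrow>
     finite \<Delta> \<and> 0 \<notin> \<Delta> \<and> span \<Delta> = UNIV \<and>
     (\<forall>\<alpha>\<in>\<Delta>. \<forall>\<beta>\<in>\<Delta>. root_reflection \<alpha> \<beta> \<in> \<Delta>) \<and>
     (\<forall>\<alpha>\<in>\<Delta>. \<forall>\<beta>\<in>\<Delta>. 2 * (\<beta> \<bullet> \<alpha>) / (\<alpha> \<bullet> \<alpha>) \<in> \<int>)"

definition reduced_root_system :: "'a::euclidean_space set \<Rightarrow> bool" where
  "reduced_root_system \<Delta> \<longleftrightarrow> root_system \<Delta> \<and>
     (\<forall>\<alpha>\<in>\<Delta>. \<forall>c::real. c *\<^sub>R \<alpha> \<in> \<Delta> \<longrightarrow> c = 1 \<or> c = -1)"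

definition irreducible_root_system :: "'a::euclidean_space set \<Rightarrow> bool" where
  "irreducible_root_system \<Delta> \<longleftrightarrow> root_system \<Delta> \<and>
     \<not> (\<exists>A B. A \<noteq> {} \<and> B \<noteq> {} \<and> A \<union> B = \<Delta> \<and> A \<inter> B = {} \<and>
            (\<forall>a\<in>A. \<forall>b\<in>B. a \<bullet> b = 0))"

text \<open>Root systems of simple complex Lie algebras = irreducible reduced root systems.\<close>
definition simple_lie_root_system :: "'a::euclidean_space set \<Rightarrow> bool" where
  "simple_lie_root_system \<Delta> \<longleftrightarrow> reduced_root_system \<Delta> \<and> irreducible_root_system \<Delta>"

definition root_base :: "'a::euclidean_space set \<Rightarrow> 'a set \<Rightarrow> bool" where
  "root_base \<Delta> S \<longleftrightarrow> S \<subseteq> \<Delta> \<and> independent S \<and>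
     (\<forall>\<beta>\<in>\<Delta>. \<exists>c::'a \<Rightarrow> int. \<beta> = (\<Sum>\<gamma>\<in>S. of_int (c \<gamma>) *\<^sub>R \<gamma>) \<and>
        ((\<forall>\<gamma>\<in>S. c \<gamma> \<ge> 0) \<or> (\<forall>\<gamma>\<in>S. c \<gamma> \<le> 0)))"

definition ht :: "'a::euclidean_space set \<Rightarrow> 'a \<Rightarrow> 'a \<Rightarrow> real" where
  "ht S \<alpha> \<mu> = real_vector.representation S \<mu> \<alpha>"

definition roots_of_height :: "'a::euclidean_space set \<Rightarrow> 'a set \<Rightarrow> 'a \<Rightarrow> int \<Rightarrow> 'a set" where
  "roots_of_height \<Delta> S \<alpha> i = {\<gamma>\<in>\<Delta>. ht S \<alpha> \<gamma> = of_int i}"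

definition highest_root :: "'a::euclidean_space set \<Rightarrow> 'a set \<Rightarrow> 'a \<Rightarrow> bool" where
  "highest_root \<Delta> S \<theta> \<longleftrightarrow> \<theta> \<in> \<Delta> \<and>
     (\<forall>\<beta>\<in>\<Delta>. \<forall>\<alpha>\<in>S. ht S \<alpha> \<beta> \<le> ht S \<alpha> \<theta>)"

end

theory Submission
  imports Defs
begin

lemma span_base_univ:
  assumes rs: "root_system \<Delta>" and rb: "root_base \<Delta> S"
  shows "span S = UNIV"
proof -
  have "\<Delta> \<subseteq> span S"
  proof
    fix \<beta> assume "\<beta> \<in> \<Delta>"
    then obtain c :: "'a \<Rightarrow> int" where "\<beta> = (\<Sum>\<gamma>\<in>S. of_int (c \<gamma>) *\<^sub>R \<gamma>)"
      using rb unfolding root_base_def by blast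
    then show "\<beta> \<in> span S"
      by (simp add: span_sum span_scale span_base)
  qed
  then have "span \<Delta> \<subseteq> span S" by (simp add: span_minimal)
  then show ?thesis using rs unfolding root_system_def by auto
qed

lemma refl_inv:
  assumes "(g::'a::euclidean_space) \<noteq> 0"
  shows "root_reflection g (root_reflection g x) = x"
proof -
  have gg: "g \<bullet> g \<noteq> 0" using assms by simp
  define c where "c = 2 * (x \<bullet> g) / (g \<bullet> g)"
  have "(x - c *\<^sub>R g) \<bullet> g = - (x \<bullet> g)"
    using gg by (simp add: c_def inner_diff_left field_simps)
  then show ?thesis
    unfolding root_reflection_def c_def[symmetric]
    by (simp add: c_def[symmetric] algebra_simps)
qed

lemma refl_self:
  assumes "(x::'a::euclidean_space) \<noteq> 0"
  shows "root_reflection x x = - x"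
proof -
  have "2 * (x \<bullet> x) / (x \<bullet> x) = 2" using assms by simp
  then show ?thesis unfolding root_reflection_def by (simp add: scaleR_2)
qed

lemma diff_root:
  assumes red: "reduced_root_system \<Delta>"
    and b: "\<beta> \<in> \<Delta>" and g: "\<gamma> \<in> \<Delta>" and ne: "\<beta> \<noteq> \<gamma>" and pos: "\<beta> \<bullet> \<gamma> > 0"
  shows "\<beta> - \<gamma> \<in> \<Delta>"
proof -
  have rs: "root_system \<Delta>" using red unfolding reduced_root_system_def by auto
  have b0: "\<beta> \<noteq> 0" and g0: "\<gamma> \<noteq> 0" using rs b g unfolding root_system_def by auto
  have bb: "\<beta> \<bullet> \<beta> > 0" and gg: "\<gamma> \<bullet> \<gamma> > 0" using b0 g0 by auto
  define a where "a = 2 * (\<beta> \<bullet> \<gamma>) / (\<gamma> \<bullet> \<gamma>)"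
  define e where "e = 2 * (\<gamma> \<bullet> \<beta>) / (\<beta> \<bullet> \<beta>)"
  have aI: "a \<in> \<int>" using rs b g unfolding root_system_def a_def by blast
  have eI: "e \<in> \<int>" using rs b g unfolding root_system_def e_def by blast
  have apos: "a > 0" using pos gg by (simp add: a_def)
  have epos: "e > 0" using pos bb by (simp add: e_def inner_commute)
  have strict: "\<beta> \<bullet> \<gamma> < norm \<beta> * norm \<gamma>"
  proof -
    have le: "\<beta> \<bullet> \<gamma> \<le> norm \<beta> * norm \<gamma>" by (rule norm_cauchy_schwarz)
    have "\<beta> \<bullet> \<gamma> \<noteq> norm \<beta> * norm \<gamma>"
    proof
      assume "\<beta> \<bullet> \<gamma> = norm \<beta> * norm \<gamma>"
      then have eq: "norm \<beta> *\<^sub>R \<gamma> = norm \<gamma> *\<^sub>R \<beta>" by (simp add: norm_cauchy_schwarz_eq)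
      have nb: "norm \<beta> > 0" "norm \<gamma> > 0" using b0 g0 by auto
      have "\<gamma> = (1 / norm \<beta>) *\<^sub>R (norm \<beta> *\<^sub>R \<gamma>)"
        using nb by simp
      also have "\<dots> = (norm \<gamma> / norm \<beta>) *\<^sub>R \<beta>" unfolding eq by simp
      finally have geq: "\<gamma> = (norm \<gamma> / norm \<beta>) *\<^sub>R \<beta>" .
      then have "(norm \<gamma> / norm \<beta>) = 1 \<or> (norm \<gamma> / norm \<beta>) = -1"
        using red b g unfolding reduced_root_system_def by metis
      moreover have "norm \<gamma> / norm \<beta> > 0" using nb by simp
      ultimately have "norm \<gamma> / norm \<beta> = 1" by linarith
      then have "\<gamma> = \<beta>" using geq by (metis scaleR_one)
      then show False using ne by simp
    qed
    then show ?thesis using le by simp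
  qed
  have prod: "a * e < 4"
  proof -
    have "a * e = 4 * (\<beta> \<bullet> \<gamma>)^2 / ((\<beta> \<bullet> \<beta>) * (\<gamma> \<bullet> \<gamma>))"
      by (simp add: a_def e_def inner_commute power2_eq_square field_simps)
    also have "(\<beta> \<bullet> \<beta>) * (\<gamma> \<bullet> \<gamma>) = (norm \<beta> * norm \<gamma>)^2"
      by (simp add: power_mult_distrib power2_norm_eq_inner)
    also have "(\<beta> \<bullet> \<gamma>)^2 < (norm \<beta> * norm \<gamma>)^2"
      using strict pos by (intro power_strict_mono) auto
    then have "4 * (\<beta> \<bullet> \<gamma>)^2 / (norm \<beta> * norm \<gamma>)^2 < 4"
      using b0 g0 by (simp add: field_simps)
    finally show ?thesis .
  qed
  obtain ai where ai: "a = of_int ai" using aI Ints_cases by blast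
  obtain ei where ei: "e = of_int ei" using eI Ints_cases by blast
  have p4: "ai * ei < 4"
  proof -
    have "real_of_int (ai * ei) < real_of_int 4" using prod ai ei by simp
    then show ?thesis by (simp only: of_int_less_iff)
  qed
  have "ai > 0" "ei > 0" using apos epos ai ei by simp_all
  have "ai = 1 \<or> ei = 1"
  proof (rule ccontr)
    assume "\<not> (ai = 1 \<or> ei = 1)"
    then have "ai \<ge> 2" "ei \<ge> 2" using \<open>ai > 0\<close> \<open>ei > 0\<close> by auto
    then have "ai * ei \<ge> 2 * 2" by (intro mult_mono) auto
    then show False using p4 by simp
  qed
  then show ?thesis
  proof
    assume "ai = 1"
    then have "a = 1" using ai by simp
    moreover have "root_reflection \<gamma> \<beta> = \<beta> - a *\<^sub>R \<gamma>"
      by (simp add: root_reflection_def a_def)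
    ultimately have "root_reflection \<gamma> \<beta> = \<beta> - \<gamma>" by simp
    then show ?thesis using rs b g unfolding root_system_def by metis
  next
    assume "ei = 1"
    then have "e = 1" using ei by simp
    moreover have "root_reflection \<beta> \<gamma> = \<gamma> - e *\<^sub>R \<beta>"
      by (simp add: root_reflection_def e_def)
    ultimately have r: "root_reflection \<beta> \<gamma> = \<gamma> - \<beta>" by simp
    then have m: "\<gamma> - \<beta> \<in> \<Delta>" using rs b g unfolding root_system_def by metis
    have "\<gamma> - \<beta> \<noteq> 0" using ne by simp
    then have "root_reflection (\<gamma> - \<beta>) (\<gamma> - \<beta>) = \<beta> - \<gamma>"
      by (simp add: refl_self)
    then show ?thesis using rs m unfolding root_system_def by metis
  qed
qed


lemma refl_sum:
  assumes "finite A"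
  shows "root_reflection g (sum h A) = (\<Sum>x\<in>A. root_reflection g (h x))"
  using assms
  by (induction A rule: finite_induct)
     (auto simp: root_reflection_def inner_add_left add_divide_distrib scaleR_add_left algebra_simps)

lemma base_facts:
  assumes rs: "root_system \<Delta>" and rb: "root_base \<Delta> S"
  shows "independent S" "span S = UNIV" "finite S" "S \<subseteq> \<Delta>"
  using rs rb span_base_univ[OF rs rb] unfolding root_base_def root_system_def
  by (auto intro: finite_subset)

lemma ht_diff:
  assumes rs: "root_system \<Delta>" and rb: "root_base \<Delta> S"
  shows "ht S a (x - y) = ht S a x - ht S a y"
  using base_facts[OF rs rb]
  by (simp add: ht_def real_vector.representation_diff)

lemma ht_scale:
  assumes rs: "root_system \<Delta>" and rb: "root_base \<Delta> S"
  shows "ht S a (r *\<^sub>R x) = r * ht S a x"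
  using base_facts[OF rs rb]
  by (simp add: ht_def real_vector.representation_scale)

lemma ht_sum:
  assumes rs: "root_system \<Delta>" and rb: "root_base \<Delta> S"
  shows "ht S a (sum h A) = (\<Sum>x\<in>A. ht S a (h x))"
  using base_facts[OF rs rb]
  by (simp add: ht_def real_vector.representation_sum)

lemma ht_basis:
  assumes rs: "root_system \<Delta>" and rb: "root_base \<Delta> S" and "g \<in> S"
  shows "ht S a g = (if a = g then 1 else 0)"
  using base_facts[OF rs rb] assms(3)
  by (simp add: ht_def real_vector.representation_basis)

lemma ht_zero: "ht S a 0 = 0"
  by (simp add: ht_def real_vector.representation_zero)

lemma ht_int:
  assumes rs: "root_system \<Delta>" and rb: "root_base \<Delta> S" and b: "\<beta> \<in> \<Delta>"
  shows "\<exists>c::int. ht S a \<beta> = of_int c"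
proof -
  obtain c :: "'a \<Rightarrow> int" where c: "\<beta> = (\<Sum>\<gamma>\<in>S. of_int (c \<gamma>) *\<^sub>R \<gamma>)"
    using rb b unfolding root_base_def by blast
  have "ht S a \<beta> = (\<Sum>\<gamma>\<in>S. of_int (c \<gamma>) * (if a = \<gamma> then 1 else 0))"
    unfolding c ht_sum[OF rs rb] ht_scale[OF rs rb]
    by (intro sum.cong refl) (simp add: ht_basis[OF rs rb])
  also have "\<dots> = (\<Sum>\<gamma>\<in>S. if a = \<gamma> then of_int (c \<gamma>) else 0)"
    by (intro sum.cong refl) auto
  also have "\<dots> = (if a \<in> S then of_int (c a) else 0)"
    using base_facts(3)[OF rs rb] by (simp add: sum.delta)
  finally show ?thesis by (metis of_int_0)
qed

lemma expand_inner:
  assumes rs: "root_system \<Delta>" and rb: "root_base \<Delta> S" and a: "\<alpha> \<in> S"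
    and orth: "\<And>g. g \<in> S \<Longrightarrow> g \<noteq> \<alpha> \<Longrightarrow> \<rho> \<bullet> g = 0"
  shows "x \<bullet> \<rho> = ht S \<alpha> x * (\<alpha> \<bullet> \<rho>)"
proof -
  note bf = base_facts[OF rs rb]
  have "x = (\<Sum>b\<in>S. representation S x b *\<^sub>R b)"
    using bf by (simp add: real_vector.sum_representation_eq)
  then have "x \<bullet> \<rho> = (\<Sum>b\<in>S. representation S x b * (b \<bullet> \<rho>))"
    by (metis (no_types, lifting) inner_scaleR_left inner_sum_left sum.cong)
  also have "\<dots> = (\<Sum>b\<in>S. if b = \<alpha> then ht S \<alpha> x * (\<alpha> \<bullet> \<rho>) else 0)"
    using orth by (intro sum.cong refl) (auto simp: ht_def inner_commute[of _ \<rho>])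
  also have "\<dots> = ht S \<alpha> x * (\<alpha> \<bullet> \<rho>)"
    using bf a by (simp add: sum.delta')
  finally show ?thesis .
qed

lemma sum_orth:
  assumes rs: "root_system \<Delta>" and rb: "root_base \<Delta> S" and g: "g \<in> S" and ne: "g \<noteq> \<alpha>"
  shows "(\<Sum>l\<in>roots_of_height \<Delta> S \<alpha> k. l) \<bullet> g = 0"
proof -
  note bf = base_facts[OF rs rb]
  define A where "A = roots_of_height \<Delta> S \<alpha> k"
  define f where "f = root_reflection g"
  have gD: "g \<in> \<Delta>" using g bf by auto
  have g0: "g \<noteq> 0" using gD rs unfolding root_system_def by auto
  have finA: "finite A" using rs unfolding A_def roots_of_height_def root_system_def by auto
  have fA: "f x \<in> A" if "x \<in> A" for x
  proof -
    have "f x \<in> \<Delta>" using that gD rs unfolding A_def roots_of_height_def root_system_def f_def by auto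
    moreover have "ht S \<alpha> (f x) = ht S \<alpha> x"
      unfolding f_def root_reflection_def ht_diff[OF rs rb] ht_scale[OF rs rb] ht_basis[OF rs rb g]
      using ne by simp
    ultimately show ?thesis using that unfolding A_def roots_of_height_def by auto
  qed
  have ff: "f (f x) = x" for x unfolding f_def using refl_inv[OF g0] .
  have img: "f ` A = A"
  proof
    show "f ` A \<subseteq> A" using fA by auto
    show "A \<subseteq> f ` A" using fA ff by (metis image_eqI subsetI)
  qed
  have inj: "inj_on f A" by (metis ff inj_on_inverseI)
  have "sum id A = sum id (f ` A)" using img by simp
  also have "\<dots> = (\<Sum>x\<in>A. f x)" using sum.reindex[OF inj] by simp
  also have "\<dots> = f (sum id A)" unfolding f_def using refl_sum[OF finA, of g id] by simp
  finally have eq: "sum id A = f (sum id A)" .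
  then have "(2 * (sum id A \<bullet> g) / (g \<bullet> g)) *\<^sub>R g = 0"
    unfolding f_def root_reflection_def by (simp add: algebra_simps)
  then have "sum id A \<bullet> g = 0" using g0 by simp
  then show ?thesis unfolding A_def by (simp add: id_def)
qed

lemma exists_pos:
  assumes rs: "root_system \<Delta>" and rb: "root_base \<Delta> S" and a: "\<alpha> \<in> S"
    and k: "k \<ge> 1" and ne: "roots_of_height \<Delta> S \<alpha> k \<noteq> {}"
    and mu: "ht S \<alpha> \<mu> > 0"
  shows "\<exists>l\<in>roots_of_height \<Delta> S \<alpha> k. \<mu> \<bullet> l > 0"
proof (rule ccontr)
  assume H: "\<not> ?thesis"
  define A where "A = roots_of_height \<Delta> S \<alpha> k"
  define \<rho> where "\<rho> = (\<Sum>l\<in>A. l)"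
  have finA: "finite A" using rs unfolding A_def roots_of_height_def root_system_def by auto
  have orth: "\<And>g. g \<in> S \<Longrightarrow> g \<noteq> \<alpha> \<Longrightarrow> \<rho> \<bullet> g = 0"
    unfolding \<rho>_def A_def using sum_orth[OF rs rb] by blast
  note ei = expand_inner[OF rs rb a orth]
  have "ht S \<alpha> \<rho> = (\<Sum>l\<in>A. ht S \<alpha> l)" unfolding \<rho>_def by (rule ht_sum[OF rs rb])
  also have "\<dots> = (\<Sum>l\<in>A. of_int k)" by (intro sum.cong refl) (auto simp: A_def roots_of_height_def)
  also have "\<dots> = real (card A) * of_int k" by simp
  finally have hr: "ht S \<alpha> \<rho> = real (card A) * of_int k" .
  have "card A > 0" using finA ne unfolding A_def by (simp add: card_gt_0_iff)
  then have hpos: "ht S \<alpha> \<rho> > 0" using hr k by simp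
  then have "\<rho> \<noteq> 0" by (metis ht_zero less_irrefl)
  then have "\<rho> \<bullet> \<rho> > 0" by simp
  then have "ht S \<alpha> \<rho> * (\<alpha> \<bullet> \<rho>) > 0" using ei[of \<rho>] by simp
  then have ap: "\<alpha> \<bullet> \<rho> > 0" using hpos by (simp add: zero_less_mult_iff)
  have "\<mu> \<bullet> \<rho> > 0" using ei[of \<mu>] ap mu by simp
  moreover have "\<mu> \<bullet> \<rho> = (\<Sum>l\<in>A. \<mu> \<bullet> l)" unfolding \<rho>_def by (simp add: inner_sum_right)
  moreover have "(\<Sum>l\<in>A. \<mu> \<bullet> l) \<le> 0" using H unfolding A_def
    by (intro sum_nonpos) (auto simp: not_less)
  ultimately show False by simp
qed


lemma nonempty_heights:
  assumes red: "reduced_root_system \<Delta>" and rb: "root_base \<Delta> S" and a: "\<alpha> \<in> S"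
    and th: "\<theta> \<in> \<Delta>" and K: "ht S \<alpha> \<theta> = of_int K"
  shows "K - int n \<ge> 1 \<Longrightarrow> roots_of_height \<Delta> S \<alpha> (K - int n) \<noteq> {}"
proof (induction n)
  case 0
  then show ?case using th K unfolding roots_of_height_def by auto
next
  case (Suc n)
  have rs: "root_system \<Delta>" using red unfolding reduced_root_system_def by auto
  note bf = base_facts[OF rs rb]
  from Suc obtain l where l: "l \<in> roots_of_height \<Delta> S \<alpha> (K - int n)" by fastforce
  have aD: "\<alpha> \<in> \<Delta>" using a bf by auto
  have "ht S \<alpha> \<alpha> = 1" using ht_basis[OF rs rb a] by simp
  then have a1: "\<alpha> \<in> roots_of_height \<Delta> S \<alpha> 1" using aD unfolding roots_of_height_def by simp
  have hl: "ht S \<alpha> l = of_int (K - int n)" "l \<in> \<Delta>" using l unfolding roots_of_height_def by auto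
  have "ht S \<alpha> l > 0" using hl Suc.prems by simp
  then obtain v where v: "v \<in> roots_of_height \<Delta> S \<alpha> 1" and pos: "l \<bullet> v > 0"
    using exists_pos[OF rs rb a _ _, of 1 l] a1 by auto
  have hv: "ht S \<alpha> v = 1" "v \<in> \<Delta>" using v unfolding roots_of_height_def by auto
  have "l \<noteq> v" using hl hv Suc.prems by auto
  then have "l - v \<in> \<Delta>" using diff_root[OF red hl(2) hv(2) _ pos] by simp
  moreover have "ht S \<alpha> (l - v) = of_int (K - int (Suc n))"
    using hl hv ht_diff[OF rs rb] by simp
  ultimately show ?case unfolding roots_of_height_def by blast
qed

theorem corollary3p3:
  fixes \<Delta> S :: "'a::euclidean_space set" and \<theta> \<alpha> \<mu> :: 'a and i j :: int
  assumes "simple_lie_root_system \<Delta>"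
    and "root_base \<Delta> S"
    and "highest_root \<Delta> S \<theta>"
    and "\<alpha> \<in> S"
    and "i \<ge> 1" and "j \<ge> 1"
    and "of_int (i + j) \<le> ht S \<alpha> \<theta>"
    and "\<mu> \<in> roots_of_height \<Delta> S \<alpha> i"
  shows "\<exists>\<nu> \<in> roots_of_height \<Delta> S \<alpha> j.
           \<mu> + \<nu> \<in> roots_of_height \<Delta> S \<alpha> (i + j)"
proof -
  have red: "reduced_root_system \<Delta>" using assms(1) unfolding simple_lie_root_system_def by auto
  have rs: "root_system \<Delta>" using red unfolding reduced_root_system_def by auto
  have th: "\<theta> \<in> \<Delta>" using assms(3) unfolding highest_root_def by auto
  obtain K where K: "ht S \<alpha> \<theta> = of_int K" using ht_int[OF rs assms(2) th] by blast
  have "i + j \<le> K" using assms(7) K by simp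
  then have "K - int (nat (K - (i + j))) = i + j" by simp
  then have ne: "roots_of_height \<Delta> S \<alpha> (i + j) \<noteq> {}"
    using nonempty_heights[OF red assms(2) assms(4) th K, of "nat (K - (i + j))"] assms(5,6)
    by simp
  have hm: "ht S \<alpha> \<mu> = of_int i" "\<mu> \<in> \<Delta>" using assms(8) unfolding roots_of_height_def by auto
  then have "ht S \<alpha> \<mu> > 0" using assms(5) by simp
  then obtain l where l: "l \<in> roots_of_height \<Delta> S \<alpha> (i + j)" and pos: "\<mu> \<bullet> l > 0"
    using exists_pos[OF rs assms(2) assms(4) _ ne] assms(5,6) by auto
  have hl: "ht S \<alpha> l = of_int (i + j)" "l \<in> \<Delta>" using l unfolding roots_of_height_def by auto
  have "l \<noteq> \<mu>" using hl hm assms(6) by auto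
  moreover have "l \<bullet> \<mu> > 0" using pos by (simp add: inner_commute)
  ultimately have "l - \<mu> \<in> \<Delta>" using diff_root[OF red hl(2) hm(2)] by simp
  moreover have "ht S \<alpha> (l - \<mu>) = of_int j" using hl hm ht_diff[OF rs assms(2)] by simp
  ultimately have "l - \<mu> \<in> roots_of_height \<Delta> S \<alpha> j" unfolding roots_of_height_def by blast
  moreover have "\<mu> + (l - \<mu>) = l" by simp
  ultimately show ?thesis using l by metis
qed

end
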